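(* Let $G$ be a finite non-abelian group such that the non-centralizer graph $\Upsilon_G$ is $n$-regular. Then $n$ is even, $|G|\equiv 0\pmod 8$, and $n+2\leq |G|\leq 4n/3$.
   Context: For a finite group $G$, $C_G(x)$ denotes the centralizer of $x\in G$. The non-centralizer graph $\Upsilon_G$ is the simple graph with vertex set $G$ in which two distinct vertices $x,y$ are adjacent if and only if $C_G(x)\neq C_G(y)$. A graph is $n$-regular if every vertex has degree exactly $n$. *)

theory Defs
  imports "HOL-Algebra.Group"
begin

definition centralizer :: "('a, 'b) monoid_scheme \<Rightarrow> 'a \<Rightarrow> 'a set" where
  "centralizer G x = {y \<in> carrier G. x \<otimes>\<^bsub>G\<^esub> y = y \<otimes>\<^bsub>G\<^esub> x}"

definition noncentralizer_adj :: "('a, 'b) monoid_scheme \<Rightarrow> 'a \<Rightarrow> 'a \<Rightarrow> bool" where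
  "noncentralizer_adj G x y \<longleftrightarrow> x \<in> carrier G \<and> y \<in> carrier G \<and> x \<noteq> y \<and> centralizer G x \<noteq> centralizer G y"

definition noncentralizer_degree :: "('a, 'b) monoid_scheme \<Rightarrow> 'a \<Rightarrow> nat" where
  "noncentralizer_degree G x = card {y \<in> carrier G. noncentralizer_adj G x y}"

definition noncentralizer_regular :: "('a, 'b) monoid_scheme \<Rightarrow> nat \<Rightarrow> bool" where
  "noncentralizer_regular G n \<longleftrightarrow> (\<forall>x \<in> carrier G. noncentralizer_degree G x = n)"

end

theory Submission
  imports Defs "HOL-Algebra.Coset"
begin


context group
begin

definition Zc where "Zc = {z \<in> carrier G. \<forall>g\<in>carrier G. z \<otimes> g = g \<otimes> z}"

lemma lcanc: "g \<in> carrier G \<Longrightarrow> u \<in> carrier G \<Longrightarrow> v \<in> carrier G \<Longrightarrow> g \<otimes> u = g \<otimes> v \<Longrightarrow> u = v"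
  by (metis inv_closed l_inv l_one m_assoc)

lemma comm_inv: assumes a: "a \<in> carrier G" and g: "g \<in> carrier G" and ag: "a \<otimes> g = g \<otimes> a"
  shows "inv a \<otimes> g = g \<otimes> inv a"
proof -
  have "inv a \<otimes> g = inv a \<otimes> g \<otimes> (a \<otimes> inv a)" using a g by simp
  also have "\<dots> = inv a \<otimes> (a \<otimes> g) \<otimes> inv a" using a g ag by (simp add: m_assoc)
  also have "\<dots> = g \<otimes> inv a" using a g by (simp add: m_assoc[symmetric])
  finally show ?thesis .
qed

lemma ZcD: "z \<in> Zc \<Longrightarrow> g \<in> carrier G \<Longrightarrow> z \<otimes> g = g \<otimes> z" and ZcG: "z \<in> Zc \<Longrightarrow> z \<in> carrier G"
  unfolding Zc_def by auto

lemma Zc_sub: "subgroup Zc G"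
proof (rule subgroupI)
  show "Zc \<subseteq> carrier G" "Zc \<noteq> {}" unfolding Zc_def by auto
  fix a b assume a: "a \<in> Zc"
  show "inv a \<in> Zc" unfolding Zc_def
  proof (safe)
    show "inv a \<in> carrier G" using a Zc_def by auto
    fix g assume g: "g \<in> carrier G"
    have "a \<otimes> g = g \<otimes> a" using a g Zc_def by auto
    then show "inv a \<otimes> g = g \<otimes> inv a" using a g unfolding Zc_def
      using comm_inv[of a g] ZcG[OF a] by simp
  qed
  assume b: "b \<in> Zc"
  show "a \<otimes> b \<in> Zc" unfolding Zc_def
  proof safe
    show "a \<otimes> b \<in> carrier G" using a b ZcG by auto
    fix g assume g: "g \<in> carrier G"
    have "a \<otimes> b \<otimes> g = a \<otimes> (g \<otimes> b)" using a b g ZcG ZcD[OF b g] by (simp add: m_assoc)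
    also have "\<dots> = g \<otimes> (a \<otimes> b)" using a b g ZcG ZcD[OF a g] by (simp add: m_assoc[symmetric])
    finally show "a \<otimes> b \<otimes> g = g \<otimes> (a \<otimes> b)" .
  qed
qed

lemma C_full: "x \<in> carrier G \<Longrightarrow> centralizer G x = carrier G \<longleftrightarrow> x \<in> Zc"
  unfolding centralizer_def Zc_def by auto

lemma C_mul: assumes "x \<in> carrier G" "z \<in> Zc" shows "centralizer G (x \<otimes> z) = centralizer G x"
  unfolding centralizer_def
proof (safe)
  fix y assume y: "y \<in> carrier G" "x \<otimes> z \<otimes> y = y \<otimes> (x \<otimes> z)"
  have zG: "z \<in> carrier G" using assms ZcG by blast
  have "x \<otimes> y \<otimes> z = x \<otimes> z \<otimes> y" using y assms zG ZcD[OF assms(2) y(1)] by (simp add: m_assoc)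
  also have "\<dots> = y \<otimes> x \<otimes> z" using y assms zG by (simp add: m_assoc)
  finally show "x \<otimes> y = y \<otimes> x" using y assms zG right_cancel by simp
next
  fix y assume y: "y \<in> carrier G" "x \<otimes> y = y \<otimes> x"
  have zG: "z \<in> carrier G" using assms ZcG by blast
  have "x \<otimes> z \<otimes> y = x \<otimes> y \<otimes> z" using y(1) assms zG ZcD[OF assms(2) y(1)] by (simp add: m_assoc)
  also have "\<dots> = y \<otimes> (x \<otimes> z)" using y assms zG by (simp add: m_assoc[symmetric])
  finally show "x \<otimes> z \<otimes> y = y \<otimes> (x \<otimes> z)" .
qed

lemma C_inv: assumes "x \<in> carrier G" shows "centralizer G (inv x) = centralizer G x"
  unfolding centralizer_def
proof safe
  fix y assume y: "y \<in> carrier G" "inv x \<otimes> y = y \<otimes> inv x"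
  then show "x \<otimes> y = y \<otimes> x" using comm_inv[of "inv x" y] assms by simp
next
  fix y assume y: "y \<in> carrier G" "x \<otimes> y = y \<otimes> x"
  then show "inv x \<otimes> y = y \<otimes> inv x" using comm_inv[of x y] assms by simp
qed

lemma double_sub:
  assumes N: "subgroup N G" and g: "g \<in> carrier G" "g \<notin> N" and gg: "g \<otimes> g \<in> N"
    and nrm: "\<And>n. n \<in> N \<Longrightarrow> \<exists>m\<in>N. n \<otimes> g = g \<otimes> m"
    and fin: "finite (carrier G)"
  shows "subgroup (N \<union> (\<lambda>n. g \<otimes> n) ` N) G \<and> card (N \<union> (\<lambda>n. g \<otimes> n) ` N) = 2 * card N"
proof
  have NG: "N \<subseteq> carrier G" by (rule subgroup.subset[OF N])
  have mN: "a \<otimes> b \<in> N" if "a \<in> N" "b \<in> N" for a b by (rule subgroup.m_closed[OF N that])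
  have iN: "inv a \<in> N" if "a \<in> N" for a by (rule subgroup.m_inv_closed[OF N that])
  have c1: "a \<otimes> b \<in> N \<union> (\<lambda>n. g \<otimes> n) ` N" if a: "a \<in> N \<union> (\<lambda>n. g \<otimes> n) ` N" and b: "b \<in> N \<union> (\<lambda>n. g \<otimes> n) ` N" for a b
  proof -
    consider "a \<in> N" | n1 where "n1 \<in> N" "a = g \<otimes> n1" using a by blast
    then show ?thesis
    proof cases
      case 1
      then obtain m where m: "m \<in> N" "a \<otimes> g = g \<otimes> m" using nrm by blast
      consider "b \<in> N" | n2 where "n2 \<in> N" "b = g \<otimes> n2" using b by blast
      then show ?thesis
      proof cases
        case 1 then show ?thesis using mN \<open>a \<in> N\<close> by blast
      next
        case 2
        have G: "a \<in> carrier G" "n2 \<in> carrier G" "m \<in> carrier G" using 2 \<open>a \<in> N\<close> m NG by auto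
        have "a \<otimes> b = (a \<otimes> g) \<otimes> n2" using 2 G g by (simp add: m_assoc)
        also have "\<dots> = g \<otimes> (m \<otimes> n2)" using m G g by (simp add: m_assoc)
        finally show ?thesis using mN m 2 by blast
      qed
    next
      case 2
      then obtain m where m: "m \<in> N" "n1 \<otimes> g = g \<otimes> m" using nrm by blast
      consider "b \<in> N" | n2 where "n2 \<in> N" "b = g \<otimes> n2" using b by blast
      then show ?thesis
      proof cases
        case 1
        have G: "b \<in> carrier G" "n1 \<in> carrier G" using 1 2 NG by auto
        have "a \<otimes> b = g \<otimes> (n1 \<otimes> b)" using 2 G g by (simp add: m_assoc)
        then show ?thesis using mN 1 2 by blast
      next
        case 3: 2
        have G: "n1 \<in> carrier G" "n2 \<in> carrier G" "m \<in> carrier G" using 2 3 m NG by auto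
        have "a \<otimes> b = g \<otimes> (n1 \<otimes> g) \<otimes> n2" using 2 3 G g by (simp add: m_assoc)
        also have "\<dots> = (g \<otimes> g) \<otimes> (m \<otimes> n2)" using m G g by (simp add: m_assoc)
        finally show ?thesis using mN m 3 gg by auto
      qed
    qed
  qed
  have ginv: "inv g = g \<otimes> inv (g \<otimes> g)" using g
    by (simp add: inv_mult_group m_assoc[symmetric])
  show "subgroup (N \<union> (\<lambda>n. g \<otimes> n) ` N) G"
  proof (rule subgroupI)
    show "N \<union> (\<lambda>n. g \<otimes> n) ` N \<subseteq> carrier G" using NG g by auto
    show "N \<union> (\<lambda>n. g \<otimes> n) ` N \<noteq> {}" using subgroup.one_closed[OF N] by blast
    show "a \<otimes> b \<in> N \<union> (\<lambda>n. g \<otimes> n) ` N" if "a \<in> N \<union> (\<lambda>n. g \<otimes> n) ` N" "b \<in> N \<union> (\<lambda>n. g \<otimes> n) ` N" for a b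
      using c1 that by blast
    fix a assume a: "a \<in> N \<union> (\<lambda>n. g \<otimes> n) ` N"
    then consider "a \<in> N" | n1 where "n1 \<in> N" "a = g \<otimes> n1" by blast
    then show "inv a \<in> N \<union> (\<lambda>n. g \<otimes> n) ` N"
    proof cases
      case 1 then show ?thesis using iN by blast
    next
      case 2
      have "inv a = inv n1 \<otimes> inv g" using 2 NG g by (auto simp: inv_mult_group)
      then have "inv a = inv n1 \<otimes> (g \<otimes> inv (g \<otimes> g))" by (simp only: ginv)
      moreover have "inv n1 \<in> N \<union> (\<lambda>n. g \<otimes> n) ` N" using iN 2 by blast
      moreover have "g \<otimes> inv (g \<otimes> g) \<in> N \<union> (\<lambda>n. g \<otimes> n) ` N" using iN gg by blast
      ultimately show ?thesis using c1[of "inv n1" "g \<otimes> inv (g \<otimes> g)"] by simp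
    qed
  qed
  have fN: "finite N" using fin NG finite_subset by blast
  have disj: "N \<inter> (\<lambda>n. g \<otimes> n) ` N = {}"
  proof (rule ccontr)
    assume "N \<inter> (\<lambda>n. g \<otimes> n) ` N \<noteq> {}"
    then obtain n where n: "n \<in> N" "g \<otimes> n \<in> N" by blast
    then have "g \<otimes> n \<otimes> inv n \<in> N" using mN iN by blast
    moreover have "g \<otimes> n \<otimes> inv n = g" using n g NG by (auto simp: m_assoc)
    ultimately show False using g by simp
  qed
  have "inj_on (\<lambda>n. g \<otimes> n) N"
  proof (rule inj_onI)
    fix u v assume "u \<in> N" "v \<in> N" "g \<otimes> u = g \<otimes> v"
    then show "u = v" using g NG lcanc by blast
  qed
  then have "card ((\<lambda>n. g \<otimes> n) ` N) = card N" by (rule card_image)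
  then show "card (N \<union> (\<lambda>n. g \<otimes> n) ` N) = 2 * card N"
    using card_Un_disjoint[OF fN _ disj] fN by simp
qed


lemma comm_Z: assumes a: "a \<in> carrier G" and b: "b \<in> carrier G"
  and sq: "\<And>u. u \<in> carrier G \<Longrightarrow> u \<otimes> u \<in> Zc"
  shows "\<exists>c\<in>Zc. b \<otimes> a = c \<otimes> (a \<otimes> b)"
proof -
  define z1 where "z1 = a \<otimes> b \<otimes> (a \<otimes> b)"
  define w1 where "w1 = inv (a \<otimes> a)"
  define w2 where "w2 = inv (b \<otimes> b)"
  have z1: "z1 \<in> Zc" using sq a b z1_def by auto
  have w1: "w1 \<in> Zc" unfolding w1_def by (rule subgroup.m_inv_closed[OF Zc_sub sq[OF a]])
  have w2: "w2 \<in> Zc" unfolding w2_def by (rule subgroup.m_inv_closed[OF Zc_sub sq[OF b]])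
  note G = ZcG[OF z1] ZcG[OF w1] ZcG[OF w2]
  have ia: "w1 \<otimes> a = inv a" using a unfolding w1_def
    by (simp add: inv_mult_group m_assoc)
  have ib: "w2 \<otimes> b = inv b" using b unfolding w2_def
    by (simp add: inv_mult_group m_assoc)
  have "(z1 \<otimes> w1 \<otimes> w2) \<otimes> (a \<otimes> b) = z1 \<otimes> (w1 \<otimes> (w2 \<otimes> a) \<otimes> b)"
    using a b G by (simp add: m_assoc)
  also have "\<dots> = z1 \<otimes> ((w1 \<otimes> a) \<otimes> (w2 \<otimes> b))"
    using a b G ZcD[OF w2 a] by (simp add: m_assoc)
  also have "\<dots> = z1 \<otimes> inv a \<otimes> inv b" using ia ib a b G by (simp add: m_assoc)
  also have "\<dots> = inv a \<otimes> z1 \<otimes> inv b" using ZcD[OF z1, of "inv a"] a by simp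
  finally have "(z1 \<otimes> w1 \<otimes> w2) \<otimes> (a \<otimes> b) = inv a \<otimes> z1 \<otimes> inv b" .
  also have "\<dots> = b \<otimes> a" unfolding z1_def using a b by (simp add: m_assoc[symmetric]) (simp add: m_assoc)
  finally have eq: "(z1 \<otimes> w1 \<otimes> w2) \<otimes> (a \<otimes> b) = b \<otimes> a" .
  moreover have "z1 \<otimes> w1 \<otimes> w2 \<in> Zc"
    by (rule subgroup.m_closed[OF Zc_sub subgroup.m_closed[OF Zc_sub z1 w1] w2])
  ultimately show ?thesis by (metis eq)
qed

lemma nrm_Z: assumes N: "subgroup N G" "Zc \<subseteq> N" and g: "g \<in> carrier G"
  and sq: "\<And>u. u \<in> carrier G \<Longrightarrow> u \<otimes> u \<in> Zc" and n: "n \<in> N"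
  shows "\<exists>m\<in>N. n \<otimes> g = g \<otimes> m"
proof -
  have nG: "n \<in> carrier G" using subgroup.subset[OF N(1)] n by blast
  obtain c where c: "c \<in> Zc" "n \<otimes> g = c \<otimes> (g \<otimes> n)" using comm_Z[OF g nG sq] by blast
  have cG: "c \<in> carrier G" by (rule ZcG[OF c(1)])
  have "c \<otimes> (g \<otimes> n) = c \<otimes> g \<otimes> n" using cG g nG by (simp add: m_assoc)
  also have "\<dots> = g \<otimes> c \<otimes> n" using ZcD[OF c(1) g] by simp
  also have "\<dots> = g \<otimes> (c \<otimes> n)" using cG g nG by (simp add: m_assoc)
  finally have e: "n \<otimes> g = g \<otimes> (c \<otimes> n)" using c(2) by simp
  have "c \<in> N" using c(1) N(2) by blast
  then have "c \<otimes> n \<in> N" by (rule subgroup.m_closed[OF N(1) _ n])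
  then show ?thesis using e by blast
qed

lemma main:
  assumes fin: "finite (carrier G)" and nc: "x \<in> carrier G" "y \<in> carrier G" "x \<otimes> y \<noteq> y \<otimes> x"
    and reg: "noncentralizer_regular G n"
  shows "even n \<and> 8 dvd card (carrier G) \<and> n + 2 \<le> card (carrier G) \<and> 3 * card (carrier G) \<le> 4 * n"
proof -
  define E where "E u = {v \<in> carrier G. centralizer G v = centralizer G u}" for u
  have EG: "E u \<subseteq> carrier G" for u unfolding E_def by auto
  have deg: "n = card (carrier G) - card (E u)" if u: "u \<in> carrier G" for u
  proof -
    have "{v \<in> carrier G. noncentralizer_adj G u v} = carrier G - E u"
      unfolding E_def noncentralizer_adj_def using u by auto
    then have "noncentralizer_degree G u = card (carrier G) - card (E u)"
      unfolding noncentralizer_degree_def using card_Diff_subset[OF finite_subset[OF EG fin] EG] by simp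
    then show ?thesis using reg u unfolding noncentralizer_regular_def by auto
  qed
  have C1: "centralizer G \<one> = carrier G" unfolding centralizer_def by auto
  have E1: "E \<one> = Zc" unfolding E_def C1 using C_full ZcG by blast
  have cardE: "card (E u) = card Zc" if u: "u \<in> carrier G" for u
  proof -
    have "card (E u) \<le> card (carrier G)" "card (E \<one>) \<le> card (carrier G)"
      using EG fin card_mono by blast+
    then show ?thesis using deg[OF u] deg[of \<one>] E1 by simp
  qed
  have Eeq: "E u = (\<lambda>z. u \<otimes> z) ` Zc" if u: "u \<in> carrier G" for u
  proof -
    have sub: "(\<lambda>z. u \<otimes> z) ` Zc \<subseteq> E u" unfolding E_def using C_mul[OF u] u ZcG by auto
    have "inj_on (\<lambda>z. u \<otimes> z) Zc"
    proof (rule inj_onI)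
      fix a b assume "a \<in> Zc" "b \<in> Zc" "u \<otimes> a = u \<otimes> b"
      then show "a = b" using lcanc[OF u] ZcG by blast
    qed
    then have "card ((\<lambda>z. u \<otimes> z) ` Zc) = card (E u)" using card_image cardE[OF u] by simp
    then show ?thesis using card_subset_eq[OF finite_subset[OF EG fin] sub] by simp
  qed
  have sq: "u \<otimes> u \<in> Zc" if u: "u \<in> carrier G" for u
  proof -
    have "inv u \<in> E u" unfolding E_def using C_inv u by auto
    then obtain z where z: "z \<in> Zc" "inv u = u \<otimes> z" using Eeq[OF u] by auto
    have zG: "z \<in> carrier G" by (rule ZcG[OF z(1)])
    have "u \<otimes> u \<otimes> z = u \<otimes> (u \<otimes> z)" using u zG by (simp add: m_assoc)
    also have "\<dots> = \<one>" using z(2)[symmetric] u by simp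
    finally have "inv z = u \<otimes> u" using u zG by (intro inv_equality) auto
    moreover have "inv z \<in> Zc" by (rule subgroup.m_inv_closed[OF Zc_sub z(1)])
    ultimately show ?thesis by simp
  qed
  obtain c where c: "c \<in> Zc" "y \<otimes> x = c \<otimes> (x \<otimes> y)" using comm_Z[OF nc(1,2) sq] by blast
  have cG: "c \<in> carrier G" by (rule ZcG[OF c(1)])
  have c1: "c \<noteq> \<one>" using c nc by auto
  have cc: "c \<otimes> c = \<one>"
  proof -
    have xx: "x \<otimes> x \<in> Zc" using sq nc by blast
    have xc: "x \<otimes> (c \<otimes> w) = c \<otimes> (x \<otimes> w)" if w: "w \<in> carrier G" for w
    proof -
      have "x \<otimes> (c \<otimes> w) = x \<otimes> c \<otimes> w" using w nc(1) cG by (simp add: m_assoc)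
      also have "\<dots> = c \<otimes> x \<otimes> w" using ZcD[OF c(1) nc(1)] by simp
      also have "\<dots> = c \<otimes> (x \<otimes> w)" using w nc(1) cG by (simp add: m_assoc)
      finally show ?thesis .
    qed
    have "x \<otimes> x \<otimes> y = y \<otimes> (x \<otimes> x)" using ZcD[OF xx nc(2)] .
    also have "\<dots> = y \<otimes> x \<otimes> x" using nc(1,2) by (simp add: m_assoc)
    also have "\<dots> = c \<otimes> (x \<otimes> y) \<otimes> x" using c(2) by simp
    also have "\<dots> = c \<otimes> x \<otimes> (y \<otimes> x)" using nc(1,2) cG by (simp add: m_assoc)
    also have "\<dots> = c \<otimes> x \<otimes> (c \<otimes> (x \<otimes> y))" using c(2) by simp
    also have "\<dots> = c \<otimes> (x \<otimes> (c \<otimes> (x \<otimes> y)))" using nc(1,2) cG by (simp add: m_assoc)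
    also have "\<dots> = c \<otimes> (c \<otimes> (x \<otimes> (x \<otimes> y)))" using xc nc(1,2) by simp
    also have "\<dots> = (c \<otimes> c) \<otimes> (x \<otimes> x \<otimes> y)" using nc(1,2) cG by (simp add: m_assoc)
    finally have "x \<otimes> x \<otimes> y = (c \<otimes> c) \<otimes> (x \<otimes> x \<otimes> y)" .
    then show ?thesis using nc(1,2) cG r_cancel_one' by simp
  qed
  have fZ: "finite Zc" using fin ZcG finite_subset subsetI by metis
  have evZ: "even (card Zc)"
  proof -
    interpret Z: group "G\<lparr>carrier := Zc\<rparr>" by (rule subgroup.subgroup_is_group[OF Zc_sub is_group])
    have one: "\<one> \<in> Zc" by (rule subgroup.one_closed[OF Zc_sub])
    have ic: "inv c = c" using cc cG by (intro inv_equality) auto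
    have sH: "subgroup {\<one>, c} (G\<lparr>carrier := Zc\<rparr>)"
    proof (rule Z.subgroupI)
      show "{\<one>, c} \<subseteq> carrier (G\<lparr>carrier := Zc\<rparr>)" using c(1) one by simp
      show "{\<one>, c} \<noteq> {}" by simp
      fix a b assume a: "a \<in> {\<one>, c}"
      have aZ: "a \<in> Zc" using a one c(1) by blast
      have "inv\<^bsub>G\<lparr>carrier := Zc\<rparr>\<^esub> a = inv a" by (rule m_inv_consistent[OF Zc_sub aZ])
      moreover have "inv a \<in> {\<one>, c}" using a ic by auto
      ultimately show "inv\<^bsub>G\<lparr>carrier := Zc\<rparr>\<^esub> a \<in> {\<one>, c}" by simp
      assume b: "b \<in> {\<one>, c}"
      show "a \<otimes>\<^bsub>G\<lparr>carrier := Zc\<rparr>\<^esub> b \<in> {\<one>, c}" using a b cc cG by auto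
    qed
    have "card (rcosets\<^bsub>G\<lparr>carrier := Zc\<rparr>\<^esub> {\<one>, c}) * card {\<one>, c} = order (G\<lparr>carrier := Zc\<rparr>)"
      by (rule Z.lagrange[OF sH])
    then have "card (rcosets\<^bsub>G\<lparr>carrier := Zc\<rparr>\<^esub> {\<one>, c}) * 2 = card Zc"
      using c1 by (simp add: order_def)
    then show ?thesis by (metis dvd_triv_right)
  qed
  have xZ: "x \<notin> Zc"
  proof
    assume "x \<in> Zc" then show False using ZcD[of x y] nc by simp
  qed
  define N1 where "N1 = Zc \<union> (\<lambda>n. x \<otimes> n) ` Zc"
  have nrm1: "\<And>m. m \<in> Zc \<Longrightarrow> \<exists>k\<in>Zc. m \<otimes> x = x \<otimes> k"
    by (rule nrm_Z[OF Zc_sub _ nc(1) sq]) auto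
  have s1: "subgroup N1 G \<and> card N1 = 2 * card Zc" unfolding N1_def
    by (rule double_sub[OF Zc_sub nc(1) xZ sq[OF nc(1)] nrm1 fin])
  have yN1: "y \<notin> N1"
  proof
    assume "y \<in> N1"
    then consider "y \<in> Zc" | z where "z \<in> Zc" "y = x \<otimes> z" unfolding N1_def by blast
    then show False
    proof cases
      case 1 then show False using ZcD[OF 1 nc(1)] nc(3) by simp
    next
      case 2
      have zG: "z \<in> carrier G" by (rule ZcG[OF 2(1)])
      have "x \<otimes> y = x \<otimes> x \<otimes> z" using 2 nc zG by (simp add: m_assoc)
      also have "\<dots> = x \<otimes> z \<otimes> x" using ZcD[OF 2(1) nc(1)] nc zG by (simp add: m_assoc)
      also have "\<dots> = y \<otimes> x" using 2 by simp
      finally show False using nc(3) by simp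
    qed
  qed
  have ZN1: "Zc \<subseteq> N1" unfolding N1_def by blast
  have yy: "y \<otimes> y \<in> N1" using sq[OF nc(2)] ZN1 by blast
  have N1s: "subgroup N1 G" using s1 by blast
  have nrm2: "\<And>m. m \<in> N1 \<Longrightarrow> \<exists>k\<in>N1. m \<otimes> y = y \<otimes> k"
    by (rule nrm_Z[OF N1s ZN1 nc(2) sq])
  have s2: "subgroup (N1 \<union> (\<lambda>n. y \<otimes> n) ` N1) G \<and> card (N1 \<union> (\<lambda>n. y \<otimes> n) ` N1) = 2 * card N1"
    by (rule double_sub[OF N1s nc(2) yN1 yy nrm2 fin])
  have "card (rcosets (N1 \<union> (\<lambda>n. y \<otimes> n) ` N1)) * card (N1 \<union> (\<lambda>n. y \<otimes> n) ` N1) = order G"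
    using lagrange s2 by blast
  then have "card (rcosets (N1 \<union> (\<lambda>n. y \<otimes> n) ` N1)) * (4 * card Zc) = card (carrier G)"
    using s1 s2 by (simp add: order_def)
  then have d4: "4 * card Zc dvd card (carrier G)" by (metis dvd_triv_right)
  have pos: "card (carrier G) > 0" using fin nc(1) card_gt_0_iff by blast
  have le4: "4 * card Zc \<le> card (carrier G)" using d4 pos dvd_imp_le by blast
  have one: "\<one> \<in> Zc" by (rule subgroup.one_closed[OF Zc_sub])
  have Z1: "card Zc > 0" using fZ one card_gt_0_iff by blast
  have nE: "n = card (carrier G) - card Zc" using deg[of \<one>] E1 by simp
  obtain k where k: "card Zc = 2 * k" using evZ by blast
  have "8 * k dvd card (carrier G)" using d4 k by simp
  then have "8 dvd card (carrier G)" using dvd_mult_left by blast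
  then show ?thesis using nE le4 k Z1 by auto
qed

end
theorem theorem2p12:
  fixes G :: "('a, 'b) monoid_scheme" and n :: nat
  assumes "group G" and "finite (carrier G)" and "\<not> comm_group G"
    and "noncentralizer_regular G n"
  shows "even n \<and> 8 dvd card (carrier G) \<and> n + 2 \<le> card (carrier G) \<and> 3 * card (carrier G) \<le> 4 * n"
proof -
  interpret group G by (rule assms(1))
  obtain x y where xy: "x \<in> carrier G" "y \<in> carrier G" "x \<otimes>\<^bsub>G\<^esub> y \<noteq> y \<otimes>\<^bsub>G\<^esub> x"
    using group_comm_groupI assms(3) by blast
  show ?thesis by (rule main[OF assms(2) xy assms(4)])
qed

end
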